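(* Let $G$ be a finite group which is an $\mathcal{L}(\operatorname{Aut}(G))$-equational domain. Let $H=\prod_{i\in\mathbb{Z}}G$ be the direct power of $G$ indexed by $\mathbb{Z}$, with elements $(g_i\mid i\in\mathbb{Z})$. For $\phi\in\operatorname{Aut}(G)$ let $f_\phi((g_i\mid i\in\mathbb{Z}))=(\phi(g_i)\mid i\in\mathbb{Z})$, let $\sigma((g_i\mid i\in\mathbb{Z}))=(g_{i+1}\mid i\in\mathbb{Z})$, and let $A\subseteq\operatorname{Aut}(H)$ be the group generated by $\sigma$ and all $f_\phi$, $\phi\in\operatorname{Aut}(G)$. Then the $\mathcal{L}(A)$-group $H$ is $\mathbf{q}_\omega$-compact.
   Context: For a group $K$ and a subgroup $B\subseteq\operatorname{Aut}(K)$, $\mathcal{L}(B)=\{\cdot,{}^{-1},1\}\cup\{\psi\mid\psi\in B\}$ is the group language with a unary function symbol for each $\psi\in B$, interpreted as $\psi$. An $\mathcal{L}(B)$-equation in variables $X=\{x_1,\dots,x_n\}$ is $t(X)=1$ with $t$ an $\mathcal{L}(B)$-term (equivalently a product $\psi_1(x_{i_1}^{\varepsilon_1})\cdots\psi_k(x_{i_k}^{\varepsilon_k})$, $\psi_j\in B$, $\varepsilon_j=\pm1$); an $\mathcal{L}(B)$-system is any set of such equations, and $V_K(S)\subseteq K^n$ is its solution set. $K$ is an $\mathcal{L}(B)$-equational domain if for every $n$ the union of any two subsets of $K^n$ of the form $V_K(S)$ is again of this form. The $\mathcal{L}(B)$-group $K$ is $\mathbf{q}_\omega$-compact if for every $\mathcal{L}(B)$-system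 $S$ and every $\mathcal{L}(B)$-equation $w(X)=1$ with $V_K(S)\subseteq V_K(w(X)=1)$ there is a finite subsystem $S'\subseteq S$ with $V_K(S')\subseteq V_K(w(X)=1)$. *)

theory Defs
  imports "HOL-Algebra.Algebra"
begin

text \<open>Terms of the group language L(B): variables x_0, x_1, ..., the constant 1,
  multiplication, inversion, and a unary function symbol for each psi (the symbol
  is the function itself; membership in B is checked by lterm_over).\<close>
datatype 'f lterm = LVar nat | LOne | LMul "'f lterm" "'f lterm" | LInv "'f lterm"
  | LApp 'f "'f lterm"

fun lterm_over :: "'f set \<Rightarrow> nat \<Rightarrow> 'f lterm \<Rightarrow> bool" where
  "lterm_over B n (LVar i) = (i < n)"
| "lterm_over B n LOne = True"
| "lterm_over B n (LMul s t) = (lterm_over B n s \<and> lterm_over B n t)"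
| "lterm_over B n (LInv t) = lterm_over B n t"
| "lterm_over B n (LApp f t) = (f \<in> B \<and> lterm_over B n t)"

fun leval :: "('a, 'b) monoid_scheme \<Rightarrow> (nat \<Rightarrow> 'a) \<Rightarrow> ('a \<Rightarrow> 'a) lterm \<Rightarrow> 'a" where
  "leval K x (LVar i) = x i"
| "leval K x LOne = \<one>\<^bsub>K\<^esub>"
| "leval K x (LMul s t) = leval K x s \<otimes>\<^bsub>K\<^esub> leval K x t"
| "leval K x (LInv t) = inv\<^bsub>K\<^esub> (leval K x t)"
| "leval K x (LApp f t) = f (leval K x t)"

definition tuples :: "('a, 'b) monoid_scheme \<Rightarrow> nat \<Rightarrow> (nat \<Rightarrow> 'a) set" where
  "tuples K n = PiE {..<n} (\<lambda>_. carrier K)"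

text \<open>An L(B)-system in n variables: a set of terms t, standing for equations t = 1.\<close>
definition lsystem :: "('a \<Rightarrow> 'a) set \<Rightarrow> nat \<Rightarrow> ('a \<Rightarrow> 'a) lterm set \<Rightarrow> bool" where
  "lsystem B n S \<longleftrightarrow> (\<forall>t\<in>S. lterm_over B n t)"

definition solset :: "('a, 'b) monoid_scheme \<Rightarrow> nat \<Rightarrow> ('a \<Rightarrow> 'a) lterm set \<Rightarrow> (nat \<Rightarrow> 'a) set" where
  "solset K n S = {x \<in> tuples K n. \<forall>t\<in>S. leval K x t = \<one>\<^bsub>K\<^esub>}"

definition equational_domain :: "('a, 'b) monoid_scheme \<Rightarrow> ('a \<Rightarrow> 'a) set \<Rightarrow> bool" where
  "equational_domain K B \<longleftrightarrow>
     (\<forall>n S1 S2. lsystem B n S1 \<and> lsystem B n S2 \<longrightarrow>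
        (\<exists>S. lsystem B n S \<and> solset K n S1 \<union> solset K n S2 = solset K n S))"

definition q_omega_compact :: "('a, 'b) monoid_scheme \<Rightarrow> ('a \<Rightarrow> 'a) set \<Rightarrow> bool" where
  "q_omega_compact K B \<longleftrightarrow>
     (\<forall>n S w. lsystem B n S \<and> lterm_over B n w \<and> solset K n S \<subseteq> solset K n {w} \<longrightarrow>
        (\<exists>S'. S' \<subseteq> S \<and> finite S' \<and> solset K n S' \<subseteq> solset K n {w}))"

definition dir_power_int :: "('a, 'b) monoid_scheme \<Rightarrow> (int \<Rightarrow> 'a) monoid" where
  "dir_power_int G =
    \<lparr>carrier = {g. \<forall>i. g i \<in> carrier G},
     monoid.mult = (\<lambda>g h i. g i \<otimes>\<^bsub>G\<^esub> h i),
     one = (\<lambda>i. \<one>\<^bsub>G\<^esub>)\<rparr>"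

definition coord_auto :: "('a, 'b) monoid_scheme \<Rightarrow> ('a \<Rightarrow> 'a) \<Rightarrow> (int \<Rightarrow> 'a) \<Rightarrow> (int \<Rightarrow> 'a)" where
  "coord_auto G \<phi> = (\<lambda>g \<in> carrier (dir_power_int G). (\<lambda>i. \<phi> (g i)))"

definition shift_auto :: "('a, 'b) monoid_scheme \<Rightarrow> (int \<Rightarrow> 'a) \<Rightarrow> (int \<Rightarrow> 'a)" where
  "shift_auto G = (\<lambda>g \<in> carrier (dir_power_int G). (\<lambda>i. g (i + 1)))"

definition shift_group :: "('a, 'b) monoid_scheme \<Rightarrow> ((int \<Rightarrow> 'a) \<Rightarrow> (int \<Rightarrow> 'a)) set" where
  "shift_group G = generate (AutoGroup (dir_power_int G))
     (insert (shift_auto G) (coord_auto G ` auto G))"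

end

theory Submission imports Defs "HOL-Analysis.Function_Topology"
begin

lemma H_group:
  assumes G: "group G"
  shows "group (dir_power_int G)"
proof (rule groupI)
  interpret group G by (fact G)
  show "\<And>x y. x \<in> carrier (dir_power_int G) \<Longrightarrow> y \<in> carrier (dir_power_int G) \<Longrightarrow>
        x \<otimes>\<^bsub>dir_power_int G\<^esub> y \<in> carrier (dir_power_int G)"
    by (auto simp: dir_power_int_def)
  show "\<one>\<^bsub>dir_power_int G\<^esub> \<in> carrier (dir_power_int G)" by (auto simp: dir_power_int_def)
  show "\<And>x y z. x \<in> carrier (dir_power_int G) \<Longrightarrow> y \<in> carrier (dir_power_int G) \<Longrightarrow> z \<in> carrier (dir_power_int G) \<Longrightarrow>
        x \<otimes>\<^bsub>dir_power_int G\<^esub> y \<otimes>\<^bsub>dir_power_int G\<^esub> z = x \<otimes>\<^bsub>dir_power_int G\<^esub> (y \<otimes>\<^bsub>dir_power_int G\<^esub> z)"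
    by (auto simp: dir_power_int_def m_assoc)
  show "\<And>x. x \<in> carrier (dir_power_int G) \<Longrightarrow> \<one>\<^bsub>dir_power_int G\<^esub> \<otimes>\<^bsub>dir_power_int G\<^esub> x = x"
    by (auto simp: dir_power_int_def)
  show "\<And>x. x \<in> carrier (dir_power_int G) \<Longrightarrow> \<exists>y\<in>carrier (dir_power_int G). y \<otimes>\<^bsub>dir_power_int G\<^esub> x = \<one>\<^bsub>dir_power_int G\<^esub>"
  proof -
    fix x assume "x \<in> carrier (dir_power_int G)"
    then show "\<exists>y\<in>carrier (dir_power_int G). y \<otimes>\<^bsub>dir_power_int G\<^esub> x = \<one>\<^bsub>dir_power_int G\<^esub>"
      by (intro bexI[of _ "\<lambda>i. inv\<^bsub>G\<^esub> (x i)"]) (auto simp: dir_power_int_def)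
  qed
qed

lemma H_inv:
  assumes G: "group G" and x: "x \<in> carrier (dir_power_int G)"
  shows "inv\<^bsub>dir_power_int G\<^esub> x = (\<lambda>i. inv\<^bsub>G\<^esub> (x i))"
proof -
  interpret group G by (fact G)
  show ?thesis
    by (rule group.inv_equality[OF H_group[OF G]]) (use x in \<open>auto simp: dir_power_int_def\<close>)
qed

definition loc_map :: "('a, 'b) monoid_scheme \<Rightarrow> ((int \<Rightarrow> 'a) \<Rightarrow> (int \<Rightarrow> 'a)) \<Rightarrow> bool" where
  "loc_map G f \<longleftrightarrow> (\<exists>k \<phi>. \<forall>x\<in>carrier (dir_power_int G). f x = (\<lambda>i. \<phi> (x (i + k))))"

lemma shift_in_auto:
  assumes G: "group G"
  shows "shift_auto G \<in> auto (dir_power_int G)"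
proof -
  have "bij_betw (shift_auto G) (carrier (dir_power_int G)) (carrier (dir_power_int G))"
  proof (rule bij_betw_byWitness[where f' = "\<lambda>x i. x (i - 1)"])
    show "\<forall>a\<in>carrier (dir_power_int G). (\<lambda>i. shift_auto G a (i - 1)) = a"
      by (auto simp: shift_auto_def)
    show "\<forall>a'\<in>carrier (dir_power_int G). shift_auto G (\<lambda>i. a' (i - 1)) = a'"
      by (auto simp: shift_auto_def dir_power_int_def)
    show "shift_auto G ` carrier (dir_power_int G) \<subseteq> carrier (dir_power_int G)"
      by (auto simp: shift_auto_def dir_power_int_def)
    show "(\<lambda>x i. x (i - 1)) ` carrier (dir_power_int G) \<subseteq> carrier (dir_power_int G)"
      by (auto simp: dir_power_int_def)
  qed
  moreover have "shift_auto G \<in> hom (dir_power_int G) (dir_power_int G)"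
    using monoid.m_closed[OF group.is_monoid[OF G]] by (auto simp: hom_def shift_auto_def dir_power_int_def)
  ultimately show ?thesis
    by (auto simp: auto_def Bij_def shift_auto_def)
qed

lemma coord_in_auto:
  assumes G: "group G" and phi: "\<phi> \<in> auto G"
  shows "coord_auto G \<phi> \<in> auto (dir_power_int G)"
proof -
  interpret group G by (fact G)
  have bij: "bij_betw \<phi> (carrier G) (carrier G)" and hom: "\<phi> \<in> hom G G"
    using phi by (auto simp: auto_def Bij_def)
  let ?p = "inv_into (carrier G) \<phi>"
  have bij: "bij_betw (coord_auto G \<phi>) (carrier (dir_power_int G)) (carrier (dir_power_int G))"
  proof (rule bij_betw_byWitness[where f' = "\<lambda>x i. ?p (x i)"])
    show "\<forall>a\<in>carrier (dir_power_int G). (\<lambda>i. ?p (coord_auto G \<phi> a i)) = a"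
      using bij by (auto simp: coord_auto_def dir_power_int_def bij_betw_def)
    show "\<forall>a'\<in>carrier (dir_power_int G). coord_auto G \<phi> (\<lambda>i. ?p (a' i)) = a'"
      using bij by (auto simp: coord_auto_def dir_power_int_def bij_betw_def f_inv_into_f inv_into_into)
    show "coord_auto G \<phi> ` carrier (dir_power_int G) \<subseteq> carrier (dir_power_int G)"
      using bij by (auto simp: coord_auto_def dir_power_int_def bij_betw_def)
    show "(\<lambda>x i. ?p (x i)) ` carrier (dir_power_int G) \<subseteq> carrier (dir_power_int G)"
      using bij by (auto simp: dir_power_int_def bij_betw_def inv_into_into)
  qed
  moreover have "coord_auto G \<phi> \<in> hom (dir_power_int G) (dir_power_int G)"
    using hom by (auto simp: hom_def coord_auto_def dir_power_int_def Pi_def)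
  ultimately show ?thesis
    by (auto simp: auto_def Bij_def coord_auto_def)
qed

lemma shift_group_props:
  assumes G: "group G" and f: "f \<in> shift_group G"
  shows "f \<in> auto (dir_power_int G) \<and> loc_map G f"
proof -
  interpret group G by (fact G)
  define H where "H = dir_power_int G"
  interpret A: group "AutoGroup H" using group.AutoGroup[OF H_group[OF G]] by (simp add: H_def)
  have cA: "carrier (AutoGroup H) = auto H" by (simp add: AutoGroup_def)
  have multA: "\<And>a b. a \<in> auto H \<Longrightarrow> b \<in> auto H \<Longrightarrow> a \<otimes>\<^bsub>AutoGroup H\<^esub> b = compose (carrier H) a b"
    by (auto simp: AutoGroup_def BijGroup_def auto_def)
  have oneA: "\<one>\<^bsub>AutoGroup H\<^esub> = (\<lambda>x\<in>carrier H. x)"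
    by (simp add: AutoGroup_def BijGroup_def)
  have autoc: "\<And>a x. a \<in> auto H \<Longrightarrow> x \<in> carrier H \<Longrightarrow> a x \<in> carrier H"
    by (auto simp: auto_def hom_def)
  have gens: "insert (shift_auto G) (coord_auto G ` auto G) \<subseteq> auto H"
    using shift_in_auto[OF G] coord_in_auto[OF G] by (auto simp: H_def)
  have invauto: "\<And>h. h \<in> auto H \<Longrightarrow> inv\<^bsub>AutoGroup H\<^esub> h \<in> auto H"
    using cA by (metis A.inv_closed)
  have invid: "\<And>h x. h \<in> auto H \<Longrightarrow> x \<in> carrier H \<Longrightarrow> h ((inv\<^bsub>AutoGroup H\<^esub> h) x) = x"
  proof -
    fix h x assume h: "h \<in> auto H" and x: "x \<in> carrier H"
    have "h \<otimes>\<^bsub>AutoGroup H\<^esub> inv\<^bsub>AutoGroup H\<^esub> h = \<one>\<^bsub>AutoGroup H\<^esub>"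
      using h cA by simp
    then have "compose (carrier H) h (inv\<^bsub>AutoGroup H\<^esub> h) x = x"
      using h cA x invauto[OF h] by (simp add: multA oneA)
    then show "h ((inv\<^bsub>AutoGroup H\<^esub> h) x) = x" using x by (simp add: compose_def)
  qed
  from f have "f \<in> generate (AutoGroup H) (insert (shift_auto G) (coord_auto G ` auto G))"
    by (simp add: shift_group_def H_def)
  then have "f \<in> auto H \<and> loc_map G f"
  proof (induction rule: generate.induct)
    case one
    have "loc_map G (\<one>\<^bsub>AutoGroup H\<^esub>)"
      unfolding loc_map_def oneA by (rule exI[of _ 0], rule exI[of _ id]) (auto simp: H_def)
    then show ?case using cA by auto
  next
    case (incl h)
    then show ?case
    proof
      assume "h = shift_auto G"
      then show ?thesis using gens unfolding loc_map_def
        by (intro conjI, simp, intro exI[of _ 1] exI[of _ id]) (auto simp: shift_auto_def)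
    next
      assume "h \<in> coord_auto G ` auto G"
      then obtain \<phi> where "h = coord_auto G \<phi>" "\<phi> \<in> auto G" by auto
      then show ?thesis using gens unfolding loc_map_def
        by (intro conjI, force, intro exI[of _ 0] exI[of _ \<phi>]) (auto simp: coord_auto_def)
    qed
  next
    case (inv h)
    then have h: "h \<in> auto H" using gens by auto
    have ia: "inv\<^bsub>AutoGroup H\<^esub> h \<in> auto H" using invauto[OF h] .
    from inv.hyps show ?case
    proof
      assume hs: "h = shift_auto G"
      have "\<forall>x\<in>carrier H. (inv\<^bsub>AutoGroup H\<^esub> h) x = (\<lambda>i. id x (i + -1))"
      proof
        fix x assume x: "x \<in> carrier H"
        have "h ((inv\<^bsub>AutoGroup H\<^esub> h) x) = x" by (rule invid[OF h x])
        moreover have "(inv\<^bsub>AutoGroup H\<^esub> h) x \<in> carrier H" using autoc[OF ia x] .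
        ultimately have eq: "(\<lambda>i. (inv\<^bsub>AutoGroup H\<^esub> h) x (i + 1)) = x"
          by (simp add: hs shift_auto_def H_def)
        have e1: "\<And>i. (inv\<^bsub>AutoGroup H\<^esub> h) x (i + 1) = x i"
          using fun_cong[OF eq] by simp
        show "(inv\<^bsub>AutoGroup H\<^esub> h) x = (\<lambda>i. id x (i + -1))"
        proof (rule ext)
          fix i :: int
          have "(inv\<^bsub>AutoGroup H\<^esub> h) x ((i + -1) + 1) = x (i + -1)" by (rule e1)
          then show "(inv\<^bsub>AutoGroup H\<^esub> h) x i = id x (i + -1)" by simp
        qed
      qed
      then show ?thesis using ia unfolding loc_map_def H_def
        by (intro conjI, simp, intro exI[of _ "-1"] exI[of _ id]) simp
    next
      assume "h \<in> coord_auto G ` auto G"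
      then obtain \<phi> where hp: "h = coord_auto G \<phi>" and phi: "\<phi> \<in> auto G" by auto
      have inj: "inj_on \<phi> (carrier G)" using phi by (auto simp: auto_def Bij_def bij_betw_def)
      have "\<forall>x\<in>carrier H. (inv\<^bsub>AutoGroup H\<^esub> h) x = (\<lambda>i. inv_into (carrier G) \<phi> (x (i + 0)))"
      proof
        fix x assume x: "x \<in> carrier H"
        have "h ((inv\<^bsub>AutoGroup H\<^esub> h) x) = x" by (rule invid[OF h x])
        moreover have c: "(inv\<^bsub>AutoGroup H\<^esub> h) x \<in> carrier H" using autoc[OF ia x] .
        ultimately have eq: "(\<lambda>i. \<phi> ((inv\<^bsub>AutoGroup H\<^esub> h) x i)) = x"
          by (simp add: hp coord_auto_def H_def)
        have "\<And>i. \<phi> ((inv\<^bsub>AutoGroup H\<^esub> h) x i) = x i"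
          using fun_cong[OF eq] by simp
        moreover have "\<And>i. (inv\<^bsub>AutoGroup H\<^esub> h) x i \<in> carrier G" using c by (simp add: H_def dir_power_int_def)
        ultimately show "(inv\<^bsub>AutoGroup H\<^esub> h) x = (\<lambda>i. inv_into (carrier G) \<phi> (x (i + 0)))"
          using inv_into_f_f[OF inj] by (metis add_0_right)
      qed
      then show ?thesis using ia unfolding loc_map_def H_def
        by (intro conjI, simp, intro exI[of _ 0] exI[of _ "inv_into (carrier G) \<phi>"]) simp
    qed
  next
    case (eng h1 h2)
    then have a: "h1 \<in> auto H" "h2 \<in> auto H" by auto
    obtain k1 p1 where 1: "\<forall>x\<in>carrier H. h1 x = (\<lambda>i. p1 (x (i + k1)))"
      using eng unfolding loc_map_def H_def by blast
    obtain k2 p2 where 2: "\<forall>x\<in>carrier H. h2 x = (\<lambda>i. p2 (x (i + k2)))"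
      using eng unfolding loc_map_def H_def by blast
    have "\<forall>x\<in>carrier H. (h1 \<otimes>\<^bsub>AutoGroup H\<^esub> h2) x = (\<lambda>i. (p1 \<circ> p2) (x (i + (k1 + k2))))"
    proof
      fix x assume x: "x \<in> carrier H"
      have "(h1 \<otimes>\<^bsub>AutoGroup H\<^esub> h2) x = h1 (h2 x)" using a x by (simp add: multA compose_def)
      also have "\<dots> = (\<lambda>i. (p1 \<circ> p2) (x (i + (k1 + k2))))"
        using 1 2 autoc[OF a(2) x] x by (simp add: add.assoc)
      finally show "(h1 \<otimes>\<^bsub>AutoGroup H\<^esub> h2) x = (\<lambda>i. (p1 \<circ> p2) (x (i + (k1 + k2))))" .
    qed
    moreover have "h1 \<otimes>\<^bsub>AutoGroup H\<^esub> h2 \<in> auto H" using a cA by (metis A.m_closed)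
    ultimately show ?case unfolding loc_map_def H_def by blast
  qed
  then show ?thesis by (simp add: H_def)
qed


lemma tuple_comp:
  assumes "x \<in> tuples (dir_power_int G) n" "v < n"
  shows "x v j \<in> carrier G"
  using assms by (auto simp: tuples_def dir_power_int_def PiE_def Pi_def)

lemma eval_carrier:
  assumes G: "group G" and x: "x \<in> tuples (dir_power_int G) n"
    and t: "lterm_over (shift_group G) n t"
  shows "leval (dir_power_int G) x t \<in> carrier (dir_power_int G)"
  using t
proof (induction t)
  case (LVar v)
  then show ?case using x by (auto simp: tuples_def)
next
  case LOne
  then show ?case by (simp add: dir_power_int_def group.is_monoid[OF G])
next
  case (LMul s t)
  then show ?case using group.is_monoid[OF H_group[OF G]] by (simp add: monoid.m_closed)
next
  case (LInv t)
  then show ?case using group.inv_closed[OF H_group[OF G]] by simp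
next
  case (LApp f t)
  then have "f \<in> auto (dir_power_int G)" using shift_group_props[OF G] by auto
  then show ?case using LApp by (auto simp: auto_def hom_def)
qed

lemma eval_comp:
  assumes G: "group G"
  shows "leval (dir_power_int G) x (LMul s t) i = leval (dir_power_int G) x s i \<otimes>\<^bsub>G\<^esub> leval (dir_power_int G) x t i"
  by (simp add: dir_power_int_def)

lemma eval_local:
  fixes G :: "('a, 'b) monoid_scheme"
  assumes G: "group G" and t: "lterm_over (shift_group G) n t"
  shows "\<exists>r::nat. \<forall>x\<in>tuples (dir_power_int G) n. \<forall>y\<in>tuples (dir_power_int G) n. \<forall>i.
           (\<forall>v<n. \<forall>j. \<bar>j - i\<bar> \<le> int r \<longrightarrow> x v j = y v j) \<longrightarrow>
           leval (dir_power_int G) x t i = leval (dir_power_int G) y t i"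
  using t
proof (induction t)
  case (LVar v)
  show ?case
  proof (intro exI[of _ 0] ballI allI impI)
    fix x y :: "nat \<Rightarrow> int \<Rightarrow> 'a" and i :: int
    assume "\<forall>v<n. \<forall>j. \<bar>j - i\<bar> \<le> int 0 \<longrightarrow> x v j = y v j"
    then have "x v i = y v i" using LVar by simp
    then show "leval (dir_power_int G) x (LVar v) i = leval (dir_power_int G) y (LVar v) i" by simp
  qed
next
  case LOne
  then show ?case by simp
next
  case (LMul s t)
  then obtain r1 r2 where r1: "\<forall>x\<in>tuples (dir_power_int G) n. \<forall>y\<in>tuples (dir_power_int G) n. \<forall>i.
           (\<forall>v<n. \<forall>j. \<bar>j - i\<bar> \<le> int r1 \<longrightarrow> x v j = y v j) \<longrightarrow>
           leval (dir_power_int G) x s i = leval (dir_power_int G) y s i"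
    and r2: "\<forall>x\<in>tuples (dir_power_int G) n. \<forall>y\<in>tuples (dir_power_int G) n. \<forall>i.
           (\<forall>v<n. \<forall>j. \<bar>j - i\<bar> \<le> int r2 \<longrightarrow> x v j = y v j) \<longrightarrow>
           leval (dir_power_int G) x t i = leval (dir_power_int G) y t i"
    by auto
  show ?case
  proof (intro exI[of _ "max r1 r2"] ballI allI impI)
    fix x y i
    assume x: "x \<in> tuples (dir_power_int G) n" and y: "y \<in> tuples (dir_power_int G) n"
      and h: "\<forall>v<n. \<forall>j. \<bar>j - i\<bar> \<le> int (max r1 r2) \<longrightarrow> x v j = y v j"
    have "leval (dir_power_int G) x s i = leval (dir_power_int G) y s i"
    proof -
      have "\<forall>v<n. \<forall>j. \<bar>j - i\<bar> \<le> int r1 \<longrightarrow> x v j = y v j" using h by auto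
      then show ?thesis using r1 x y by blast
    qed
    moreover have "leval (dir_power_int G) x t i = leval (dir_power_int G) y t i"
    proof -
      have "\<forall>v<n. \<forall>j. \<bar>j - i\<bar> \<le> int r2 \<longrightarrow> x v j = y v j" using h by auto
      then show ?thesis using r2 x y by blast
    qed
    ultimately show "leval (dir_power_int G) x (LMul s t) i = leval (dir_power_int G) y (LMul s t) i"
      by (simp add: dir_power_int_def)
  qed
next
  case (LInv t)
  then obtain r where r: "\<forall>x\<in>tuples (dir_power_int G) n. \<forall>y\<in>tuples (dir_power_int G) n. \<forall>i.
           (\<forall>v<n. \<forall>j. \<bar>j - i\<bar> \<le> int r \<longrightarrow> x v j = y v j) \<longrightarrow>
           leval (dir_power_int G) x t i = leval (dir_power_int G) y t i"
    by auto
  show ?case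
  proof (intro exI[of _ r] ballI allI impI)
    fix x y i
    assume x: "x \<in> tuples (dir_power_int G) n" and y: "y \<in> tuples (dir_power_int G) n"
      and h: "\<forall>v<n. \<forall>j. \<bar>j - i\<bar> \<le> int r \<longrightarrow> x v j = y v j"
    have "leval (dir_power_int G) x t i = leval (dir_power_int G) y t i"
      using r x y h by blast
    then show "leval (dir_power_int G) x (LInv t) i = leval (dir_power_int G) y (LInv t) i"
      using LInv.prems eval_carrier[OF G x, of t] eval_carrier[OF G y, of t]
      by (simp add: H_inv[OF G])
  qed
next
  case (LApp f t)
  then obtain r where r: "\<forall>x\<in>tuples (dir_power_int G) n. \<forall>y\<in>tuples (dir_power_int G) n. \<forall>i.
           (\<forall>v<n. \<forall>j. \<bar>j - i\<bar> \<le> int r \<longrightarrow> x v j = y v j) \<longrightarrow>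
           leval (dir_power_int G) x t i = leval (dir_power_int G) y t i"
    by auto
  from LApp.prems have "loc_map G f" using shift_group_props[OF G] by auto
  then obtain k \<phi> where k: "\<forall>x\<in>carrier (dir_power_int G). f x = (\<lambda>i. \<phi> (x (i + k)))"
    unfolding loc_map_def by blast
  show ?case
  proof (intro exI[of _ "r + nat \<bar>k\<bar>"] ballI allI impI)
    fix x y i
    assume x: "x \<in> tuples (dir_power_int G) n" and y: "y \<in> tuples (dir_power_int G) n"
      and h: "\<forall>v<n. \<forall>j. \<bar>j - i\<bar> \<le> int (r + nat \<bar>k\<bar>) \<longrightarrow> x v j = y v j"
    have h': "\<forall>v<n. \<forall>j. \<bar>j - (i + k)\<bar> \<le> int r \<longrightarrow> x v j = y v j"
    proof (intro allI impI)
      fix v j assume v: "v < n" and jj: "\<bar>j - (i + k)\<bar> \<le> int r"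
      have "\<bar>j - i\<bar> \<le> int (r + nat \<bar>k\<bar>)" using jj by (simp add: abs_le_iff, arith)
      then show "x v j = y v j" using h v by blast
    qed
    have "leval (dir_power_int G) x t (i + k) = leval (dir_power_int G) y t (i + k)"
      using r x y h' by blast
    then show "leval (dir_power_int G) x (LApp f t) i = leval (dir_power_int G) y (LApp f t) i"
      using LApp.prems eval_carrier[OF G x, of t] eval_carrier[OF G y, of t] k
      by simp
  qed
qed

definition shx :: "nat \<Rightarrow> int \<Rightarrow> (nat \<Rightarrow> int \<Rightarrow> 'a) \<Rightarrow> (nat \<Rightarrow> int \<Rightarrow> 'a)" where
  "shx n c x = (\<lambda>v\<in>{..<n}. \<lambda>j. x v (j + c))"

lemma shx_tuples:
  assumes "x \<in> tuples (dir_power_int G) n"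
  shows "shx n c x \<in> tuples (dir_power_int G) n"
  using assms by (auto simp: shx_def tuples_def dir_power_int_def PiE_def Pi_def)

lemma eval_shift:
  assumes G: "group G" and x: "x \<in> tuples (dir_power_int G) n"
    and t: "lterm_over (shift_group G) n t"
  shows "leval (dir_power_int G) (shx n c x) t = (\<lambda>j. leval (dir_power_int G) x t (j + c))"
  using t
proof (induction t)
  case (LVar v)
  then show ?case by (simp add: shx_def)
next
  case LOne
  then show ?case by (simp add: dir_power_int_def)
next
  case (LMul s t)
  then show ?case by (simp add: dir_power_int_def)
next
  case (LInv t)
  then show ?case
    using eval_carrier[OF G x, of t] eval_carrier[OF G shx_tuples[OF x, of c], of t]
    by (simp add: H_inv[OF G])
next
  case (LApp f t)
  from LApp.prems have "loc_map G f" using shift_group_props[OF G] by auto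
  then obtain k \<phi> where k: "\<forall>x\<in>carrier (dir_power_int G). f x = (\<lambda>i. \<phi> (x (i + k)))"
    unfolding loc_map_def by blast
  have IH: "leval (dir_power_int G) (shx n c x) t = (\<lambda>j. leval (dir_power_int G) x t (j + c))"
    using LApp by simp
  have c1: "(\<lambda>j. leval (dir_power_int G) x t (j + c)) \<in> carrier (dir_power_int G)"
    using eval_carrier[OF G shx_tuples[OF x, of c], of t] LApp.prems IH by simp
  have c2: "leval (dir_power_int G) x t \<in> carrier (dir_power_int G)"
    using eval_carrier[OF G x, of t] LApp.prems by simp
  show ?case
    using IH c1 c2 k by (simp add: ac_simps)
qed


definition ttop :: "('a, 'b) monoid_scheme \<Rightarrow> nat \<Rightarrow> (nat \<Rightarrow> int \<Rightarrow> 'a) topology" where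
  "ttop G n = product_topology (\<lambda>v. product_topology (\<lambda>i. discrete_topology (carrier G)) UNIV) {..<n}"

lemma topspace_ttop: "topspace (ttop G n) = tuples (dir_power_int G) n"
  by (auto simp: ttop_def tuples_def dir_power_int_def PiE_def Pi_def extensional_def)

lemma compact_ttop:
  assumes "finite (carrier G)"
  shows "compact_space (ttop G n)"
  unfolding ttop_def
  using assms by (simp add: compact_space_product_topology compact_space_discrete_topology)

lemma coord_open:
  assumes v: "v < n" and a: "a \<in> carrier G"
  shows "openin (ttop G n) {y \<in> topspace (ttop G n). y v j = a}"
proof -
  have c1: "continuous_map (ttop G n) (product_topology (\<lambda>i. discrete_topology (carrier G)) UNIV) (\<lambda>y. y v)"
    unfolding ttop_def using v by (intro continuous_map_product_projection) simp
  have c2: "continuous_map (product_topology (\<lambda>i. discrete_topology (carrier G)) UNIV) (discrete_topology (carrier G)) (\<lambda>g. g j)"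
    by (intro continuous_map_product_projection) simp
  have c: "continuous_map (ttop G n) (discrete_topology (carrier G)) (\<lambda>y. y v j)"
    using continuous_map_compose[OF c1 c2] by (simp add: o_def)
  have "openin (ttop G n) {y \<in> topspace (ttop G n). y v j \<in> {a}}"
    using a by (intro openin_continuous_map_preimage[OF c]) simp
  then show ?thesis by simp
qed

lemma open_local:
  assumes J: "finite J"
    and loc: "\<forall>x\<in>topspace (ttop G n). \<forall>y\<in>topspace (ttop G n). (\<forall>v<n. \<forall>j\<in>J. x v j = y v j) \<longrightarrow> F x = F y"
  shows "openin (ttop G n) {x \<in> topspace (ttop G n). P (F x)}"
proof (subst openin_subopen, intro ballI)
  fix x assume x: "x \<in> {x \<in> topspace (ttop G n). P (F x)}"
  define N where "N = topspace (ttop G n) \<inter> \<Inter> ((\<lambda>(v, j). {y \<in> topspace (ttop G n). y v j = x v j}) ` ({..<n} \<times> J))"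
  have "openin (ttop G n) N"
    unfolding N_def
  proof (rule openin_Int_Inter)
    show "finite ((\<lambda>(v, j). {y \<in> topspace (ttop G n). y v j = x v j}) ` ({..<n} \<times> J))"
      using J by simp
    show "openin (ttop G n) (topspace (ttop G n))" by simp
      fix Z assume "Z \<in> (\<lambda>(v, j). {y \<in> topspace (ttop G n). y v j = x v j}) ` ({..<n} \<times> J)"
      then obtain v j where vj: "v < n" "Z = {y \<in> topspace (ttop G n). y v j = x v j}" by auto
      have "x v j \<in> carrier G" using x vj(1) tuple_comp[of x G n v j] by (simp add: topspace_ttop)
      then show "openin (ttop G n) Z" using coord_open[OF vj(1), of "x v j" G j] vj(2) by simp
  qed
  moreover have "x \<in> N" using x unfolding N_def by auto
  moreover have "N \<subseteq> {x \<in> topspace (ttop G n). P (F x)}"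
  proof
    fix y assume y: "y \<in> N"
    then have "y \<in> topspace (ttop G n)" "\<forall>v<n. \<forall>j\<in>J. y v j = x v j" unfolding N_def by auto
    moreover have "x \<in> topspace (ttop G n)" using x by simp
    ultimately have "F y = F x" using loc by blast
    then show "y \<in> {x \<in> topspace (ttop G n). P (F x)}" using x \<open>y \<in> topspace (ttop G n)\<close> by simp
  qed
  ultimately show "\<exists>T. openin (ttop G n) T \<and> x \<in> T \<and> T \<subseteq> {x \<in> topspace (ttop G n). P (F x)}"
    by blast
qed

lemma closed_local:
  assumes J: "finite J"
    and loc: "\<forall>x\<in>topspace (ttop G n). \<forall>y\<in>topspace (ttop G n). (\<forall>v<n. \<forall>j\<in>J. x v j = y v j) \<longrightarrow> F x = F y"
  shows "closedin (ttop G n) {x \<in> topspace (ttop G n). P (F x)}"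
proof -
  have "topspace (ttop G n) - {x \<in> topspace (ttop G n). P (F x)} = {x \<in> topspace (ttop G n). \<not> P (F x)}"
    by auto
  then show ?thesis
    using open_local[OF J loc, of "\<lambda>z. \<not> P z"] by (simp add: closedin_def)
qed

lemma closed_eval:
  fixes G :: "('a, 'b) monoid_scheme"
  assumes G: "group G" and t: "lterm_over (shift_group G) n t"
  shows "closedin (ttop G n) {x \<in> topspace (ttop G n). P (leval (dir_power_int G) x t i)}"
proof -
  obtain r :: nat where r: "\<forall>x\<in>tuples (dir_power_int G) n. \<forall>y\<in>tuples (dir_power_int G) n. \<forall>i.
           (\<forall>v<n. \<forall>j. \<bar>j - i\<bar> \<le> int r \<longrightarrow> x v j = y v j) \<longrightarrow>
           leval (dir_power_int G) x t i = leval (dir_power_int G) y t i"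
    using eval_local[OF G t] by blast
  show ?thesis
  proof (rule closed_local[where J = "{i - int r .. i + int r}" and F = "\<lambda>x. leval (dir_power_int G) x t i" and P = P])
    show "finite {i - int r .. i + int r}" by simp
    show "\<forall>x\<in>topspace (ttop G n). \<forall>y\<in>topspace (ttop G n). (\<forall>v<n. \<forall>j\<in>{i - int r..i + int r}. x v j = y v j) \<longrightarrow>
        leval (dir_power_int G) x t i = leval (dir_power_int G) y t i"
    proof (intro ballI impI)
      fix x y assume x: "x \<in> topspace (ttop G n)" and y: "y \<in> topspace (ttop G n)"
        and h: "\<forall>v<n. \<forall>j\<in>{i - int r..i + int r}. x v j = y v j"
      have "\<forall>v<n. \<forall>j. \<bar>j - i\<bar> \<le> int r \<longrightarrow> x v j = y v j"
        using h by (auto simp: abs_le_iff)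
      moreover have "x \<in> tuples (dir_power_int G) n" "y \<in> tuples (dir_power_int G) n"
        using x y by (simp_all add: topspace_ttop)
      ultimately show "leval (dir_power_int G) x t i = leval (dir_power_int G) y t i"
        using r by blast
    qed
  qed
qed

theorem lemma5:
  fixes G :: "('a, 'b) monoid_scheme"
  assumes "group G"
    and "finite (carrier G)"
    and "equational_domain G (auto G)"
  shows "q_omega_compact (dir_power_int G) (shift_group G)"
  unfolding q_omega_compact_def
proof (intro allI impI)
  fix n S w
  assume asm: "lsystem (shift_group G) n S \<and> lterm_over (shift_group G) n w \<and>
      solset (dir_power_int G) n S \<subseteq> solset (dir_power_int G) n {w}"
  have G: "group G" by fact
  let ?H = "dir_power_int G"
  let ?T = "ttop G n"
  have St: "\<And>t. t \<in> S \<Longrightarrow> lterm_over (shift_group G) n t" using asm by (auto simp: lsystem_def)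
  have wt: "lterm_over (shift_group G) n w" using asm by simp
  have sub: "solset ?H n S \<subseteq> solset ?H n {w}" using asm by simp
  have oneH: "\<one>\<^bsub>?H\<^esub> = (\<lambda>i. \<one>\<^bsub>G\<^esub>)" by (simp add: dir_power_int_def)
  show "\<exists>S'\<subseteq>S. finite S' \<and> solset ?H n S' \<subseteq> solset ?H n {w}"
  proof (rule ccontr)
    assume nf: "\<not> (\<exists>S'\<subseteq>S. finite S' \<and> solset ?H n S' \<subseteq> solset ?H n {w})"
    define C where "C = {x \<in> topspace ?T. leval ?H x w 0 \<noteq> \<one>\<^bsub>G\<^esub>}"
    define E where "E = (\<lambda>(t, i). {x \<in> topspace ?T. leval ?H x t i = \<one>\<^bsub>G\<^esub>})"
    define U where "U = insert C (E ` (S \<times> UNIV))"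
    have good: "\<exists>x. x \<in> C \<and> (\<forall>t\<in>S'. \<forall>i. x \<in> E (t, i))" if S': "S' \<subseteq> S" "finite S'" for S'
    proof -
      from nf S' obtain x where x: "x \<in> solset ?H n S'" "x \<notin> solset ?H n {w}" by blast
      have xt: "x \<in> tuples ?H n" using x by (simp add: solset_def)
      have "leval ?H x w \<noteq> \<one>\<^bsub>?H\<^esub>" using x xt by (simp add: solset_def)
      then obtain c where c: "leval ?H x w c \<noteq> \<one>\<^bsub>G\<^esub>" by (auto simp: oneH)
      let ?y = "shx n c x"
      have yt: "?y \<in> tuples ?H n" by (rule shx_tuples[OF xt])
      have "?y \<in> C"
        using c yt eval_shift[OF G xt wt, of c] by (simp add: C_def topspace_ttop)
      moreover have "\<forall>t\<in>S'. \<forall>i. ?y \<in> E (t, i)"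
      proof (intro ballI allI)
        fix t i assume t: "t \<in> S'"
        have "leval ?H x t = \<one>\<^bsub>?H\<^esub>" using x t by (simp add: solset_def)
        then have "leval ?H x t (i + c) = \<one>\<^bsub>G\<^esub>" by (simp add: oneH)
        then show "?y \<in> E (t, i)"
          using yt eval_shift[OF G xt St, of t c] t S' by (auto simp: E_def topspace_ttop)
      qed
      ultimately show ?thesis by blast
    qed
    have fip: "(\<forall>Z\<in>U. closedin ?T Z) \<and> (\<forall>F. finite F \<and> F \<subseteq> U \<longrightarrow> \<Inter> F \<noteq> {})"
    proof (intro conjI)
      show "\<forall>Z\<in>U. closedin ?T Z"
      proof
        fix Z assume "Z \<in> U"
        then consider "Z = C" | t i where "t \<in> S" "Z = E (t, i)" unfolding U_def by auto
        then show "closedin ?T Z"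
        proof cases
          case 1
          then show ?thesis using closed_eval[OF G wt, of "\<lambda>a. a \<noteq> \<one>\<^bsub>G\<^esub>" 0] by (simp add: C_def)
        next
          case 2
          then show ?thesis using closed_eval[OF G St[OF 2(1)], of "\<lambda>a. a = \<one>\<^bsub>G\<^esub>" i] by (simp add: E_def)
        qed
      qed
      show "\<forall>F. finite F \<and> F \<subseteq> U \<longrightarrow> \<Inter> F \<noteq> {}"
      proof (intro allI impI)
        fix F assume F: "finite F \<and> F \<subseteq> U"
        have "F - {C} \<subseteq> E ` (S \<times> UNIV)" using F unfolding U_def by auto
        moreover have "finite (F - {C})" using F by simp
        ultimately obtain F' where F': "F' \<subseteq> S \<times> UNIV" "finite F'" "F - {C} = E ` F'"
          using finite_subset_image by metis
        have "fst ` F' \<subseteq> S" "finite (fst ` F')" using F' by auto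
        then obtain x where x: "x \<in> C" "\<forall>t\<in>fst ` F'. \<forall>i. x \<in> E (t, i)" using good by blast
        have "x \<in> \<Inter> F"
        proof
          fix Z assume Z: "Z \<in> F"
          show "x \<in> Z"
          proof (cases "Z = C")
            case True then show ?thesis using x by simp
          next
            case False
            then have "Z \<in> E ` F'" using Z F' by blast
            then obtain t i where "(t, i) \<in> F'" "Z = E (t, i)" by auto
            then show ?thesis using x by force
          qed
        qed
        then show "\<Inter> F \<noteq> {}" by blast
      qed
    qed
    have "\<Inter> U \<noteq> {}"
      using compact_ttop[OF assms(2), of n] fip unfolding compact_space_fip by blast
    then obtain x where x: "x \<in> \<Inter> U" by blast
    then have xC: "x \<in> C" unfolding U_def by blast
    then have xt: "x \<in> tuples ?H n" by (simp add: C_def topspace_ttop)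
    have "\<forall>t\<in>S. leval ?H x t = \<one>\<^bsub>?H\<^esub>"
    proof
      fix t assume t: "t \<in> S"
      have "\<forall>i. x \<in> E (t, i)" using x t unfolding U_def by blast
      then show "leval ?H x t = \<one>\<^bsub>?H\<^esub>" by (auto simp: E_def oneH)
    qed
    then have "x \<in> solset ?H n S" using xt by (simp add: solset_def)
    then have "x \<in> solset ?H n {w}" using sub by blast
    then have "leval ?H x w 0 = \<one>\<^bsub>G\<^esub>" by (simp add: solset_def oneH)
    then show False using xC by (simp add: C_def)
  qed
qed

end
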